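(* Let $M,K$ be real anti-symmetric $m\times m$ matrices, $S:\mathbb R^m\to\mathbb R$ smooth, $A$ real symmetric and $B$ real anti-symmetric $m\times m$ matrices, and let $\mathbf z_h$ be a solution of the semi-discrete DG scheme described in the context. Let $E(\mathbf z)=S(\mathbf z)-\frac12K\mathbf z_x\cdot\mathbf z$ and $$\mathcal E_{h,j}=\int_{I_j}E(\mathbf z_h)\,dx-\Big(\tfrac12\widehat{K\mathbf z_h}\cdot\mathbf z_h^-+\tfrac14 B\,\partial_t[\mathbf z_h]\cdot[\mathbf z_h]\Big)_{j+\frac12}+\Big(\tfrac12\widehat{K\mathbf z_h}\cdot\mathbf z_h^+-\tfrac14B\,\partial_t[\mathbf z_h]\cdot[\mathbf z_h]\Big)_{j-\frac12}.$$ Then for every $j$, $$\frac{d}{dt}\mathcal E_{h,j}+\tfrac12\mathcal F(\mathbf z_h,\partial_t\mathbf z_h)_{j+\frac12}-\tfrac12\mathcal F(\mathbf z_h,\partial_t\mathbf z_h)_{j-\frac12}=0,$$ where at each interface $\mathcal F(\mathbf z,\breve{\mathbf z})=\{K\mathbf z\cdot\breve{\mathbf z}\}-\widehat{K\mathbf z}\cdot\{\breve{\mathbf z}\}+\widehat{K\breve{\mathbf z}}\cdot\{\mathbf z\}$ with $\widehat{K\mathbf z}=K\{\mathbf z\}+A[\mathbf z]+B\,\partial_t[\mathbf z]$. Consequently the total energy $$\mathcal E_h=\int_\Omega E(\mathbf z_h)\,dx+\tfrac12\sum_j\Big(\big(K\{\mathbf z_h\}+A[\mathbf z_h]\big)\cdot[\mathbf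 z_h]\Big)_{j+\frac12}$$ is constant in time.
   Context: Mesh and spaces: a one-dimensional domain $\Omega$ is partitioned into cells $I_j=[x_{j-1/2},x_{j+1/2}]$, $j=1,\dots,N$, with periodic boundary conditions (interface indices taken modulo $N$). For fixed $k\ge 0$, $V_h=\{v\in L^2(\Omega): v|_{I_j}\text{ is a polynomial of degree}\le k\ \forall j\}$ and $\mathbf V_h=(V_h)^m$. For $\mathbf v\in\mathbf V_h$, $\mathbf v^\pm_{j+1/2}$ are its right/left limits at $x_{j+1/2}$; $\{\mathbf v\}=\frac12(\mathbf v^++\mathbf v^-)$, $[\mathbf v]=\mathbf v^+-\mathbf v^-$, $\{K\mathbf v\cdot\mathbf w\}=\frac12(K\mathbf v^+\cdot\mathbf w^++K\mathbf v^-\cdot\mathbf w^-)$; subscript $j\pm\frac12$ means evaluation at $x_{j\pm1/2}$; $\mathbf z_x$ is taken cellwise. The semi-discrete DG scheme: find $\mathbf z_h(t)\in\mathbf V_h$, continuously differentiable in $t$, such that for all $j$ and all $\boldsymbol\varphi\in\mathbf V_h$, $$\int_{I_j}M\partial_t\mathbf z_h\cdot\boldsymbol\varphi\,dx-\int_{I_j}K\mathbf z_h\cdot\partial_x\boldsymbol\varphi\,dx+\big(\widehat{K\mathbf z_h}\cdot\boldsymbol\varphi^-\big)_{j+\frac12}-\big(\widehat{K\mathbf z_h}\cdot\boldsymbol\varphi^+\big)_{j-\frac12}=\int_{I_j}\nabla_{\mathbf z}S(\mathbf z_h)\cdot\boldsymbol\varphi\,dx,$$ with $\widehat{K\mathbf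 z_h}=K\{\mathbf z_h\}+A[\mathbf z_h]+B\,\partial_t[\mathbf z_h]$ at each interface. (This discretizes $M\mathbf z_t+K\mathbf z_x=\nabla_{\mathbf z}S(\mathbf z)$.) *)

theory Defs
  imports "HOL-Analysis.Analysis"
begin

text \<open>
The mesh has N cells; cell j (j = 0..N-1) is the interval
[p j, p (j+1)].  Interface i (i = 0..N-1, taken modulo N) is the left
endpoint p i of cell i; its left neighbour is cell (i-1) mod N, evaluated
at its right endpoint (for i = 0 this is cell N-1 at p N, periodicity).
Thus x_(j+1/2) of the paper (right end of cell j) is interface j+1 (mod N)
and x_(j-1/2) (left end of cell j) is interface j.

A function of V_h (vector valued, values in real^'m) is stored cellwise
by its polynomial coefficients: a :: nat => nat => real^'m, the restriction
to cell j being x |-> sum_{i<=k} x^i a j i.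
\<close>

definition pv :: "nat \<Rightarrow> (nat \<Rightarrow> real^'m) \<Rightarrow> real \<Rightarrow> real^'m" where
  "pv k a x = (\<Sum>i\<le>k. (x ^ i) *\<^sub>R a i)"

definition pvd :: "nat \<Rightarrow> (nat \<Rightarrow> real^'m) \<Rightarrow> real \<Rightarrow> real^'m" where
  "pvd k a x = (\<Sum>i\<le>k. (real i * x ^ (i - 1)) *\<^sub>R a i)"

definition cellf :: "nat \<Rightarrow> (nat \<Rightarrow> nat \<Rightarrow> real^'m) \<Rightarrow> nat \<Rightarrow> real \<Rightarrow> real^'m" where
  "cellf k a = (\<lambda>j x. pv k (a j) x)"

definition cellfx :: "nat \<Rightarrow> (nat \<Rightarrow> nat \<Rightarrow> real^'m) \<Rightarrow> nat \<Rightarrow> real \<Rightarrow> real^'m" where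
  "cellfx k a = (\<lambda>j x. pvd k (a j) x)"

definition tr_minus :: "nat \<Rightarrow> (nat \<Rightarrow> real) \<Rightarrow> (nat \<Rightarrow> real \<Rightarrow> real^'m) \<Rightarrow> nat \<Rightarrow> real^'m" where
  "tr_minus N p u i = (let l = (i mod N + N - 1) mod N in u l (p (Suc l)))"

definition tr_plus :: "nat \<Rightarrow> (nat \<Rightarrow> real) \<Rightarrow> (nat \<Rightarrow> real \<Rightarrow> real^'m) \<Rightarrow> nat \<Rightarrow> real^'m" where
  "tr_plus N p u i = u (i mod N) (p (i mod N))"

definition avg :: "nat \<Rightarrow> (nat \<Rightarrow> real) \<Rightarrow> (nat \<Rightarrow> real \<Rightarrow> real^'m) \<Rightarrow> nat \<Rightarrow> real^'m" where
  "avg N p u i = (1/2) *\<^sub>R (tr_plus N p u i + tr_minus N p u i)"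

definition jump :: "nat \<Rightarrow> (nat \<Rightarrow> real) \<Rightarrow> (nat \<Rightarrow> real \<Rightarrow> real^'m) \<Rightarrow> nat \<Rightarrow> real^'m" where
  "jump N p u i = tr_plus N p u i - tr_minus N p u i"

definition avgK :: "nat \<Rightarrow> (nat \<Rightarrow> real) \<Rightarrow> real^'m^'m \<Rightarrow> (nat \<Rightarrow> real \<Rightarrow> real^'m)
    \<Rightarrow> (nat \<Rightarrow> real \<Rightarrow> real^'m) \<Rightarrow> nat \<Rightarrow> real" where
  "avgK N p K v w i = (1/2) * ((K *v tr_plus N p v i) \<bullet> tr_plus N p w i
                             + (K *v tr_minus N p v i) \<bullet> tr_minus N p w i)"

definition flux :: "nat \<Rightarrow> (nat \<Rightarrow> real) \<Rightarrow> real^'m^'m \<Rightarrow> real^'m^'m \<Rightarrow> real^'m^'m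
    \<Rightarrow> (nat \<Rightarrow> real \<Rightarrow> real^'m) \<Rightarrow> (nat \<Rightarrow> real \<Rightarrow> real^'m) \<Rightarrow> nat \<Rightarrow> real^'m" where
  "flux N p K A B v vt i = K *v avg N p v i + A *v jump N p v i + B *v jump N p vt i"

text \<open>the semi-discrete DG scheme at a time instant, with z_h given by coefficients a
  and its time derivative by coefficients a'; test functions range over all of V_h\<close>
definition dg_scheme :: "nat \<Rightarrow> (nat \<Rightarrow> real) \<Rightarrow> nat \<Rightarrow> real^'m^'m \<Rightarrow> real^'m^'m
    \<Rightarrow> real^'m^'m \<Rightarrow> real^'m^'m \<Rightarrow> (real^'m \<Rightarrow> real^'m)
    \<Rightarrow> (nat \<Rightarrow> nat \<Rightarrow> real^'m) \<Rightarrow> (nat \<Rightarrow> nat \<Rightarrow> real^'m) \<Rightarrow> bool" where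
  "dg_scheme N p k M K A B gradS a a' \<longleftrightarrow>
     (\<forall>j<N. \<forall>b :: nat \<Rightarrow> nat \<Rightarrow> real^'m.
        integral {p j..p (Suc j)} (\<lambda>x. (M *v cellf k a' j x) \<bullet> cellf k b j x)
      - integral {p j..p (Suc j)} (\<lambda>x. (K *v cellf k a j x) \<bullet> cellfx k b j x)
      + flux N p K A B (cellf k a) (cellf k a') (Suc j) \<bullet> tr_minus N p (cellf k b) (Suc j)
      - flux N p K A B (cellf k a) (cellf k a') j \<bullet> tr_plus N p (cellf k b) j
      = integral {p j..p (Suc j)} (\<lambda>x. gradS (cellf k a j x) \<bullet> cellf k b j x))"

definition cell_energy :: "nat \<Rightarrow> (nat \<Rightarrow> real) \<Rightarrow> real^'m^'m \<Rightarrow> (real^'m \<Rightarrow> real)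
    \<Rightarrow> (nat \<Rightarrow> nat \<Rightarrow> real^'m) \<Rightarrow> nat \<Rightarrow> real" where
  "cell_energy k p K S a j =
     integral {p j..p (Suc j)} (\<lambda>x. S (cellf k a j x) - (1/2) * ((K *v cellfx k a j x) \<bullet> cellf k a j x))"

definition local_energy :: "nat \<Rightarrow> (nat \<Rightarrow> real) \<Rightarrow> nat \<Rightarrow> real^'m^'m \<Rightarrow> real^'m^'m
    \<Rightarrow> real^'m^'m \<Rightarrow> (real^'m \<Rightarrow> real)
    \<Rightarrow> (nat \<Rightarrow> nat \<Rightarrow> real^'m) \<Rightarrow> (nat \<Rightarrow> nat \<Rightarrow> real^'m) \<Rightarrow> nat \<Rightarrow> real" where
  "local_energy N p k K A B S a a' j =
     cell_energy k p K S a j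
   - ((1/2) * (flux N p K A B (cellf k a) (cellf k a') (Suc j) \<bullet> tr_minus N p (cellf k a) (Suc j))
      + (1/4) * ((B *v jump N p (cellf k a') (Suc j)) \<bullet> jump N p (cellf k a) (Suc j)))
   + ((1/2) * (flux N p K A B (cellf k a) (cellf k a') j \<bullet> tr_plus N p (cellf k a) j)
      - (1/4) * ((B *v jump N p (cellf k a') j) \<bullet> jump N p (cellf k a) j))"

text \<open>interface quantity F(z, z_t) at interface i; a'' are the coefficients of the
  second time derivative (needed for the hat of z_t, which contains B d/dt [z_t])\<close>
definition Fint :: "nat \<Rightarrow> (nat \<Rightarrow> real) \<Rightarrow> nat \<Rightarrow> real^'m^'m \<Rightarrow> real^'m^'m \<Rightarrow> real^'m^'m
    \<Rightarrow> (nat \<Rightarrow> nat \<Rightarrow> real^'m) \<Rightarrow> (nat \<Rightarrow> nat \<Rightarrow> real^'m) \<Rightarrow> (nat \<Rightarrow> nat \<Rightarrow> real^'m)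
    \<Rightarrow> nat \<Rightarrow> real" where
  "Fint N p k K A B a a' a'' i =
     avgK N p K (cellf k a) (cellf k a') i
   - flux N p K A B (cellf k a) (cellf k a') i \<bullet> avg N p (cellf k a') i
   + flux N p K A B (cellf k a') (cellf k a'') i \<bullet> avg N p (cellf k a) i"

text \<open>total energy E_h (sum over interfaces j+1/2, j=1..N, i.e. all interfaces)\<close>
definition total_energy :: "nat \<Rightarrow> (nat \<Rightarrow> real) \<Rightarrow> nat \<Rightarrow> real^'m^'m \<Rightarrow> real^'m^'m
    \<Rightarrow> (real^'m \<Rightarrow> real) \<Rightarrow> (nat \<Rightarrow> nat \<Rightarrow> real^'m) \<Rightarrow> real" where
  "total_energy N p k K A S a =
     (\<Sum>j<N. cell_energy k p K S a j)
   + (1/2) * (\<Sum>i<N. (K *v avg N p (cellf k a) i + A *v jump N p (cellf k a) i)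
                        \<bullet> jump N p (cellf k a) i)"

end

theory Submission
  imports Defs
begin


lemma bl_mv: "bounded_linear (\<lambda>x. (X::real^'m^'m) *v x)"
  by (simp add: linear_conv_bounded_linear)

lemma anti_inner:
  fixes K :: "real^'m^'m"
  assumes "transpose K = - K"
  shows "(K *v x) \<bullet> y = - ((K *v y) \<bullet> x)"
proof -
  have "(K *v x) \<bullet> y = (y v* K) \<bullet> x" by (metis dot_lmul_matrix inner_commute)
  also have "y v* K = transpose K *v y" by simp
  also have "\<dots> = - (K *v y)" using assms
    by (simp add: matrix_vector_mult_def vec_eq_iff sum_negf)
  finally show ?thesis by simp
qed

lemma sym_inner:
  fixes A :: "real^'m^'m"
  assumes "transpose A = A"
  shows "(A *v x) \<bullet> y = (A *v y) \<bullet> x"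
proof -
  have "(A *v x) \<bullet> y = (y v* A) \<bullet> x" by (metis dot_lmul_matrix inner_commute)
  also have "y v* A = transpose A *v y" by simp
  finally show ?thesis using assms by simp
qed

lemma anti_self:
  fixes K :: "real^'m^'m"
  assumes "transpose K = - K"
  shows "(K *v x) \<bullet> x = 0"
  using anti_inner[OF assms, of x x] by simp

lemma pv_xderiv: "(pv k a has_vector_derivative pvd k a x) (at x within U)"
proof -
  have "((\<lambda>x. x ^ i *\<^sub>R a i) has_vector_derivative (real i * x ^ (i - 1)) *\<^sub>R a i) (at x within U)" for i
  proof -
    have "((\<lambda>x. x ^ i) has_real_derivative real i * x ^ (i - 1)) (at x within U)"
      by (rule derivative_eq_intros refl | simp)+
    from has_vector_derivative_scaleR[OF this has_vector_derivative_const[of "a i"]]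
    show ?thesis by simp
  qed
  then show ?thesis unfolding pv_def pvd_def
    by (intro has_vector_derivative_sum) auto
qed



lemma pv_tderiv:
  assumes "\<And>i. ((\<lambda>s. u s i) has_vector_derivative u' i) F"
  shows "((\<lambda>s. pv k (u s) x) has_vector_derivative pv k u' x) F"
  unfolding pv_def
  by (intro has_vector_derivative_sum bounded_linear.has_vector_derivative[OF bounded_linear_scaleR_right] assms)

lemma pvd_tderiv:
  assumes "\<And>i. ((\<lambda>s. u s i) has_vector_derivative u' i) F"
  shows "((\<lambda>s. pvd k (u s) x) has_vector_derivative pvd k u' x) F"
  unfolding pvd_def
  by (intro has_vector_derivative_sum bounded_linear.has_vector_derivative[OF bounded_linear_scaleR_right] assms)

lemma trm_deriv:
  assumes "\<And>j i. ((\<lambda>s. u s j i) has_vector_derivative u' j i) F"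
  shows "((\<lambda>s. tr_minus N p (cellf k (u s)) l) has_vector_derivative tr_minus N p (cellf k u') l) F"
  unfolding tr_minus_def cellf_def Let_def by (intro pv_tderiv assms)

lemma trp_deriv:
  assumes "\<And>j i. ((\<lambda>s. u s j i) has_vector_derivative u' j i) F"
  shows "((\<lambda>s. tr_plus N p (cellf k (u s)) l) has_vector_derivative tr_plus N p (cellf k u') l) F"
  unfolding tr_plus_def cellf_def Let_def by (intro pv_tderiv assms)

lemma mv_deriv:
  assumes "(f has_vector_derivative f') F"
  shows "((\<lambda>s. (X::real^'m^'m) *v f s) has_vector_derivative X *v f') F"
  by (rule bounded_linear.has_vector_derivative[OF bl_mv assms])

lemma inner_deriv:
  assumes "(f has_vector_derivative f') (at t within U)" "(g has_vector_derivative g') (at t within U)"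
  shows "((\<lambda>s. f s \<bullet> g s) has_real_derivative (f t \<bullet> g' + f' \<bullet> g t)) (at t within U)"
  using bounded_bilinear.has_vector_derivative[OF bounded_bilinear_inner assms]
  by (simp add: has_real_derivative_iff_has_vector_derivative)

lemma pv_cont:
  assumes "\<And>i. continuous_on U (\<lambda>s. u s i)"
  shows "continuous_on (U \<times> V) (\<lambda>y. pv k (u (fst y)) (snd y))"
  unfolding pv_def
  by (intro continuous_intros continuous_on_compose2[OF assms continuous_on_fst]) auto

lemma pvd_cont:
  assumes "\<And>i. continuous_on U (\<lambda>s. u s i)"
  shows "continuous_on (U \<times> V) (\<lambda>y. pvd k (u (fst y)) (snd y))"
  unfolding pvd_def
  by (intro continuous_intros continuous_on_compose2[OF assms continuous_on_fst]) auto



lemma cell_deriv: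
  fixes S :: "real^'m \<Rightarrow> real" and K :: "real^'m^'m"
  assumes S_grad: "\<And>z. (S has_derivative (\<lambda>h. gradS z \<bullet> h)) (at z)"
    and gradS_cont: "continuous_on UNIV gradS"
    and cd: "\<And>s j i. s \<in> {0..T} \<Longrightarrow> ((\<lambda>s. c s j i) has_vector_derivative c' s j i) (at s within {0..T})"
    and cc: "\<And>j i. continuous_on {0..T} (\<lambda>t. c' t j i)"
    and t: "t \<in> {0..T}"
  shows "((\<lambda>s. integral {a..b} (\<lambda>x. S (pv k (c s j) x) - 1/2 * ((K *v pvd k (c s j) x) \<bullet> pv k (c s j) x)))
     has_real_derivative integral {a..b} (\<lambda>x. gradS (pv k (c t j) x) \<bullet> pv k (c' t j) x
        - 1/2 * ((K *v pvd k (c' t j) x) \<bullet> pv k (c t j) x + (K *v pvd k (c t j) x) \<bullet> pv k (c' t j) x)))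
     (at t within {0..T})"
proof -
  have ccont: "continuous_on {0..T} (\<lambda>s. c s j i)" for j i
    using cd by (metis continuous_on_eq_continuous_within has_vector_derivative_continuous)
  have c1: "continuous_on ({0..T} \<times> {a..b}) (\<lambda>y. pv k (c (fst y) j) (snd y))"
    by (rule pv_cont[OF ccont])
  have c2: "continuous_on ({0..T} \<times> {a..b}) (\<lambda>y. pvd k (c (fst y) j) (snd y))"
    by (rule pvd_cont[OF ccont])
  have c3: "continuous_on ({0..T} \<times> {a..b}) (\<lambda>y. pv k (c' (fst y) j) (snd y))"
    by (rule pv_cont[OF cc])
  have c4: "continuous_on ({0..T} \<times> {a..b}) (\<lambda>y. pvd k (c' (fst y) j) (snd y))"
    by (rule pvd_cont[OF cc])
  have c5: "continuous_on ({0..T} \<times> {a..b}) (\<lambda>y. gradS (pv k (c (fst y) j) (snd y)))"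
    by (rule continuous_on_compose2[OF gradS_cont c1]) auto
  let ?fx = "\<lambda>s x. gradS (pv k (c s j) x) \<bullet> pv k (c' s j) x
        - 1/2 * ((K *v pvd k (c' s j) x) \<bullet> pv k (c s j) x + (K *v pvd k (c s j) x) \<bullet> pv k (c' s j) x)"
  have cont: "continuous_on ({0..T} \<times> cbox a b) (\<lambda>(s, x). ?fx s x)"
  proof -
    have c6: "continuous_on ({0..T} \<times> {a..b}) (\<lambda>y. K *v pvd k (c' (fst y) j) (snd y))"
      by (rule continuous_on_compose2[OF matrix_vector_mult_linear_continuous_on[of UNIV] c4]) auto
    have c7: "continuous_on ({0..T} \<times> {a..b}) (\<lambda>y. K *v pvd k (c (fst y) j) (snd y))"
      by (rule continuous_on_compose2[OF matrix_vector_mult_linear_continuous_on[of UNIV] c2]) auto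
    show ?thesis unfolding cbox_interval split_beta
      by (intro continuous_on_diff continuous_on_inner continuous_on_add continuous_on_mult
         continuous_on_const c1 c3 c5 c6 c7)
  qed
  have der: "((\<lambda>s. S (pv k (c s j) x) - 1/2 * ((K *v pvd k (c s j) x) \<bullet> pv k (c s j) x)) has_real_derivative ?fx s x)
      (at s within {0..T})" if s: "s \<in> {0..T}" for s x
  proof -
    have d1: "((\<lambda>s. pv k (c s j) x) has_vector_derivative pv k (c' s j) x) (at s within {0..T})"
      by (rule pv_tderiv[OF cd[OF s]])
    have d2: "((\<lambda>s. pvd k (c s j) x) has_vector_derivative pvd k (c' s j) x) (at s within {0..T})"
      by (rule pvd_tderiv[OF cd[OF s]])
    have dS: "((\<lambda>s. S (pv k (c s j) x)) has_real_derivative gradS (pv k (c s j) x) \<bullet> pv k (c' s j) x) (at s within {0..T})"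
      using vector_derivative_diff_chain_within[OF d1 has_derivative_at_withinI[OF S_grad]]
      by (simp add: has_real_derivative_iff_has_vector_derivative o_def)
    have dK: "((\<lambda>s. (K *v pvd k (c s j) x) \<bullet> pv k (c s j) x) has_real_derivative
        (K *v pvd k (c s j) x) \<bullet> pv k (c' s j) x + (K *v pvd k (c' s j) x) \<bullet> pv k (c s j) x) (at s within {0..T})"
      by (rule inner_deriv[OF mv_deriv[OF d2] d1])
    show ?thesis
      using DERIV_diff[OF dS DERIV_cmult[OF dK, of "1/2"]] by (simp add: algebra_simps)
  qed
  have int: "(\<lambda>x. S (pv k (c s j) x) - 1/2 * ((K *v pvd k (c s j) x) \<bullet> pv k (c s j) x)) integrable_on cbox a b"
    if "s \<in> {0..T}" for s
  proof -
    have "continuous_on UNIV (\<lambda>x. pv k (c s j) x)" "continuous_on UNIV (\<lambda>x. pvd k (c s j) x)"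
      unfolding pv_def pvd_def by (intro continuous_intros)+
    moreover have "continuous_on UNIV S"
      using S_grad by (meson continuous_on_eq_continuous_within has_derivative_continuous)
    ultimately have "continuous_on (cbox a b) (\<lambda>x. S (pv k (c s j) x) - 1/2 * ((K *v pvd k (c s j) x) \<bullet> pv k (c s j) x))"
    proof -
      assume h: "continuous_on UNIV (\<lambda>x. pv k (c s j) x)" "continuous_on UNIV (\<lambda>x. pvd k (c s j) x)"
        "continuous_on UNIV S"
      have e1: "continuous_on UNIV (\<lambda>x. K *v pvd k (c s j) x)"
        by (rule continuous_on_compose2[OF matrix_vector_mult_linear_continuous_on[of UNIV] h(2)]) auto
      have e2: "continuous_on UNIV (\<lambda>x. S (pv k (c s j) x))"
        by (rule continuous_on_compose2[OF h(3) h(1)]) auto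
      have "continuous_on UNIV (\<lambda>x. S (pv k (c s j) x) - 1/2 * ((K *v pvd k (c s j) x) \<bullet> pv k (c s j) x))"
        by (intro continuous_on_diff continuous_on_inner continuous_on_mult continuous_on_const e1 e2 h(1))
      then show ?thesis by (rule continuous_on_subset) auto
    qed
    then show ?thesis by (rule integrable_continuous)
  qed
  show ?thesis
    using leibniz_rule_field_derivative[of "{0..T}" a b, OF der int cont t convex_real_interval(5)]
    unfolding cbox_interval by simp
qed



lemma pv_contx: "continuous_on X (pv k u)" unfolding pv_def by (intro continuous_intros)
lemma pvd_contx: "continuous_on X (pvd k u)" unfolding pvd_def by (intro continuous_intros)
lemma mv_contx: "continuous_on X f \<Longrightarrow> continuous_on X (\<lambda>x. (K::real^'m^'m) *v f x)"
  by (rule continuous_on_compose2[OF matrix_vector_mult_linear_continuous_on[of UNIV]]) auto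

lemma L: "(X::real) = I1 - 1/2*(I3+I4) \<Longrightarrow> I3 = -I2 \<Longrightarrow> I0 = 0 \<Longrightarrow>
     I2 + I4 = G \<Longrightarrow> I0 - I2 + F1 - F0 = I1 \<Longrightarrow> X = F1 - F0 - 1/2*G" by argo

lemma cell_ident:
  fixes M K :: "real^'m^'m"
  assumes M_anti: "transpose M = - M" and K_anti: "transpose K = - K" and ab: "a \<le> b"
    and sch: "integral {a..b} (\<lambda>x. (M *v pv k u' x) \<bullet> pv k u' x)
      - integral {a..b} (\<lambda>x. (K *v pv k u x) \<bullet> pvd k u' x) + F1 - F0
      = integral {a..b} (\<lambda>x. gradS (pv k u x) \<bullet> pv k u' x)"
    and gc: "continuous_on UNIV gradS"
  shows "integral {a..b} (\<lambda>x. gradS (pv k u x) \<bullet> pv k u' x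
        - 1/2 * ((K *v pvd k u' x) \<bullet> pv k u x + (K *v pvd k u x) \<bullet> pv k u' x))
     = F1 - F0 - 1/2 * ((K *v pv k u b) \<bullet> pv k u' b - (K *v pv k u a) \<bullet> pv k u' a)"
proof -
  let ?I1 = "integral {a..b} (\<lambda>x. gradS (pv k u x) \<bullet> pv k u' x)"
  let ?I2 = "integral {a..b} (\<lambda>x. (K *v pv k u x) \<bullet> pvd k u' x)"
  let ?I3 = "integral {a..b} (\<lambda>x. (K *v pvd k u' x) \<bullet> pv k u x)"
  let ?I4 = "integral {a..b} (\<lambda>x. (K *v pvd k u x) \<bullet> pv k u' x)"
  have i1: "(\<lambda>x. gradS (pv k u x) \<bullet> pv k u' x) integrable_on {a..b}"
    by (intro integrable_continuous_interval continuous_on_inner pv_contx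
        continuous_on_compose2[OF gc pv_contx]) auto
  have i3: "(\<lambda>x. (K *v pvd k u' x) \<bullet> pv k u x) integrable_on {a..b}"
    by (intro integrable_continuous_interval continuous_on_inner pv_contx mv_contx pvd_contx)
  have i4: "(\<lambda>x. (K *v pvd k u x) \<bullet> pv k u' x) integrable_on {a..b}"
    by (intro integrable_continuous_interval continuous_on_inner pv_contx mv_contx pvd_contx)
  have e1: "integral {a..b} (\<lambda>x. gradS (pv k u x) \<bullet> pv k u' x
        - 1/2 * ((K *v pvd k u' x) \<bullet> pv k u x + (K *v pvd k u x) \<bullet> pv k u' x)) = ?I1 - 1/2 * (?I3 + ?I4)"
  proof -
    have i34: "(\<lambda>x. (K *v pvd k u' x) \<bullet> pv k u x + (K *v pvd k u x) \<bullet> pv k u' x) integrable_on {a..b}"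
      by (rule integrable_add[OF i3 i4])
    have "integral {a..b} (\<lambda>x. gradS (pv k u x) \<bullet> pv k u' x
        - 1/2 * ((K *v pvd k u' x) \<bullet> pv k u x + (K *v pvd k u x) \<bullet> pv k u' x))
        = ?I1 - integral {a..b} (\<lambda>x. 1/2 * ((K *v pvd k u' x) \<bullet> pv k u x + (K *v pvd k u x) \<bullet> pv k u' x))"
      by (rule integral_diff[OF i1 integrable_on_mult_right[OF i34]])
    also have "integral {a..b} (\<lambda>x. 1/2 * ((K *v pvd k u' x) \<bullet> pv k u x + (K *v pvd k u x) \<bullet> pv k u' x))
       = 1/2 * integral {a..b} (\<lambda>x. (K *v pvd k u' x) \<bullet> pv k u x + (K *v pvd k u x) \<bullet> pv k u' x)"
      by (rule integral_mult_right)
    also have "integral {a..b} (\<lambda>x. (K *v pvd k u' x) \<bullet> pv k u x + (K *v pvd k u x) \<bullet> pv k u' x) = ?I3 + ?I4"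
      by (rule integral_add[OF i3 i4])
    finally show ?thesis .
  qed
  have e2: "?I3 = - ?I2"
  proof -
    have "(\<lambda>x. (K *v pvd k u' x) \<bullet> pv k u x) = (\<lambda>x. - ((K *v pv k u x) \<bullet> pvd k u' x))"
      by (rule ext, rule anti_inner[OF K_anti])
    then show ?thesis by (simp only: integral_neg)
  qed
  have e3: "integral {a..b} (\<lambda>x. (M *v pv k u' x) \<bullet> pv k u' x) = 0"
    using anti_self[OF M_anti] by simp
  have ftc: "((\<lambda>x. (K *v pv k u x) \<bullet> pvd k u' x + (K *v pvd k u x) \<bullet> pv k u' x) has_integral
      ((K *v pv k u b) \<bullet> pv k u' b - (K *v pv k u a) \<bullet> pv k u' a)) {a..b}"
    using ab
  proof (rule fundamental_theorem_of_calculus)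
    fix x assume "x \<in> {a..b}"
    show "((\<lambda>x. (K *v pv k u x) \<bullet> pv k u' x) has_vector_derivative
        (K *v pv k u x) \<bullet> pvd k u' x + (K *v pvd k u x) \<bullet> pv k u' x) (at x within {a..b})"
      using inner_deriv[OF mv_deriv[OF pv_xderiv] pv_xderiv]
      by (simp add: has_real_derivative_iff_has_vector_derivative)
  qed
  have i2: "(\<lambda>x. (K *v pv k u x) \<bullet> pvd k u' x) integrable_on {a..b}"
    by (intro integrable_continuous_interval continuous_on_inner pvd_contx mv_contx pv_contx)
  have e4: "?I2 + ?I4 = (K *v pv k u b) \<bullet> pv k u' b - (K *v pv k u a) \<bullet> pv k u' a"
    using integral_unique[OF ftc] i2 i4 by (simp add: integral_add)
  show ?thesis by (rule L[OF e1 e2 e3 e4 sch])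
qed



definition hat :: "real^'m^'m \<Rightarrow> real^'m^'m \<Rightarrow> real^'m^'m \<Rightarrow> real^'m \<Rightarrow> real^'m \<Rightarrow> real^'m \<Rightarrow> real^'m \<Rightarrow> real^'m" where
  "hat K A B a b a' b' = K *v ((1/2) *\<^sub>R (b + a)) + A *v (b - a) + B *v (b' - a')"

lemmas expand = inner_add_left inner_add_right inner_diff_left inner_diff_right inner_scaleR_left inner_scaleR_right
  matrix_vector_right_distrib matrix_vector_mult_diff_distrib matrix_vector_mult_scaleR

lemma alg_right:
  fixes K A B :: "real^'m^'m"
  assumes K: "transpose K = - K" and A: "transpose A = A" and B: "transpose B = - B"
  shows "hat K A B a b a' b' \<bullet> a' - 1/2 * ((K *v a) \<bullet> a')
    - (1/2 * (hat K A B a' b' a'' b'' \<bullet> a + hat K A B a b a' b' \<bullet> a')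
       + 1/4 * ((B *v (b'' - a'')) \<bullet> (b - a) + (B *v (b' - a')) \<bullet> (b' - a')))
    + 1/2 * (1/2 * ((K *v b) \<bullet> b' + (K *v a) \<bullet> a') - hat K A B a b a' b' \<bullet> ((1/2) *\<^sub>R (b' + a'))
       + hat K A B a' b' a'' b'' \<bullet> ((1/2) *\<^sub>R (b + a))) = 0"
  using anti_self[OF K, of a] anti_self[OF K, of b] anti_self[OF K, of a'] anti_self[OF K, of b']
    anti_self[OF B, of a] anti_self[OF B, of b] anti_self[OF B, of a'] anti_self[OF B, of b']
    anti_inner[OF K, of a b] anti_inner[OF K, of a a'] anti_inner[OF K, of a b'] anti_inner[OF K, of b a'] anti_inner[OF K, of b b'] anti_inner[OF K, of a' b']
    anti_inner[OF B, of a b] anti_inner[OF B, of a a'] anti_inner[OF B, of a b'] anti_inner[OF B, of b a'] anti_inner[OF B, of b b'] anti_inner[OF B, of a' b']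
    anti_inner[OF B, of a'' a] anti_inner[OF B, of a'' b] anti_inner[OF B, of b'' a] anti_inner[OF B, of b'' b]
    sym_inner[OF A, of a b] sym_inner[OF A, of a a'] sym_inner[OF A, of a b'] sym_inner[OF A, of b a'] sym_inner[OF A, of b b'] sym_inner[OF A, of a' b']
  unfolding hat_def expand
  by (simp add: algebra_simps)



lemma cellf_app: "cellf k a j x = pv k (a j) x" by (simp add: cellf_def)
lemma cellfx_app: "cellfx k a j x = pvd k (a j) x" by (simp add: cellfx_def)

lemma trm_Suc: "j < N \<Longrightarrow> tr_minus N p (cellf k a) (Suc j) = pv k (a j) (p (Suc j))"
proof -
  assume j: "j < N"
  have "(Suc j mod N + N - 1) mod N = j"
  proof (cases "Suc j < N")
    case True
    then have "Suc j mod N + N - 1 = j + N" by simp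
    then show ?thesis using j by simp
  next
    case False
    then have "Suc j = N" using j by simp
    then show ?thesis by simp
  qed
  then show ?thesis by (simp add: tr_minus_def cellf_def Let_def)
qed

lemma trp_j: "j < N \<Longrightarrow> tr_plus N p (cellf k a) j = pv k (a j) (p j)"
  by (simp add: tr_plus_def cellf_def)

lemma cell_energy_deriv:
  fixes M K A B :: "real^'m^'m" and S :: "real^'m \<Rightarrow> real"
  assumes M_anti: "transpose M = - M"
    and K_anti: "transpose K = - K"
    and mesh: "p j < p (Suc j)"
    and S_grad: "\<And>z. (S has_derivative (\<lambda>h. gradS z \<bullet> h)) (at z)"
    and gradS_cont: "continuous_on UNIV gradS"
    and c_deriv: "\<And>t j i. t \<in> {0..T} \<Longrightarrow>
         ((\<lambda>s. c s j i) has_vector_derivative c' t j i) (at t within {0..T})"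
    and c'_cont: "\<And>j i. continuous_on {0..T} (\<lambda>t. c' t j i)"
    and sch: "dg_scheme N p k M K A B gradS (c t) (c' t)"
    and t: "t \<in> {0..T}" and j: "j < N"
  shows "((\<lambda>s. cell_energy k p K S (c s) j) has_real_derivative
     (flux N p K A B (cellf k (c t)) (cellf k (c' t)) (Suc j) \<bullet> tr_minus N p (cellf k (c' t)) (Suc j)
    - flux N p K A B (cellf k (c t)) (cellf k (c' t)) j \<bullet> tr_plus N p (cellf k (c' t)) j
    - 1/2 * ((K *v tr_minus N p (cellf k (c t)) (Suc j)) \<bullet> tr_minus N p (cellf k (c' t)) (Suc j)
           - (K *v tr_plus N p (cellf k (c t)) j) \<bullet> tr_plus N p (cellf k (c' t)) j)))
    (at t within {0..T})"
proof -
  have s: "integral {p j..p (Suc j)} (\<lambda>x. (M *v pv k (c' t j) x) \<bullet> pv k (c' t j) x)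
      - integral {p j..p (Suc j)} (\<lambda>x. (K *v pv k (c t j) x) \<bullet> pvd k (c' t j) x)
      + flux N p K A B (cellf k (c t)) (cellf k (c' t)) (Suc j) \<bullet> tr_minus N p (cellf k (c' t)) (Suc j)
      - flux N p K A B (cellf k (c t)) (cellf k (c' t)) j \<bullet> tr_plus N p (cellf k (c' t)) j
      = integral {p j..p (Suc j)} (\<lambda>x. gradS (pv k (c t j) x) \<bullet> pv k (c' t j) x)"
    using sch j unfolding dg_scheme_def by (simp only: cellf_app cellfx_app)
  have d: "((\<lambda>s. cell_energy k p K S (c s) j) has_real_derivative integral {p j..p (Suc j)} (\<lambda>x. gradS (pv k (c t j) x) \<bullet> pv k (c' t j) x
        - 1/2 * ((K *v pvd k (c' t j) x) \<bullet> pv k (c t j) x + (K *v pvd k (c t j) x) \<bullet> pv k (c' t j) x)))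
     (at t within {0..T})"
    unfolding cell_energy_def cellf_app cellfx_app
    by (rule cell_deriv[OF S_grad gradS_cont c_deriv c'_cont t])
  have e: "integral {p j..p (Suc j)} (\<lambda>x. gradS (pv k (c t j) x) \<bullet> pv k (c' t j) x
        - 1/2 * ((K *v pvd k (c' t j) x) \<bullet> pv k (c t j) x + (K *v pvd k (c t j) x) \<bullet> pv k (c' t j) x))
     = flux N p K A B (cellf k (c t)) (cellf k (c' t)) (Suc j) \<bullet> tr_minus N p (cellf k (c' t)) (Suc j)
      - flux N p K A B (cellf k (c t)) (cellf k (c' t)) j \<bullet> tr_plus N p (cellf k (c' t)) j
      - 1/2 * ((K *v pv k (c t j) (p (Suc j))) \<bullet> pv k (c' t j) (p (Suc j))
           - (K *v pv k (c t j) (p j)) \<bullet> pv k (c' t j) (p j))"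
    by (rule cell_ident[OF M_anti K_anti less_imp_le[OF mesh] s gradS_cont])
  show ?thesis
    using d unfolding e trm_Suc[OF j] trp_j[OF j] .
qed



lemma flux_hat: "flux N p K A B u v i = hat K A B (tr_minus N p u i) (tr_plus N p u i) (tr_minus N p v i) (tr_plus N p v i)"
  by (simp add: flux_def avg_def jump_def hat_def)

lemma jump_deriv:
  assumes "\<And>j i. ((\<lambda>s. u s j i) has_vector_derivative u' j i) F"
  shows "((\<lambda>s. jump N p (cellf k (u s)) l) has_vector_derivative jump N p (cellf k u') l) F"
  unfolding jump_def by (intro has_vector_derivative_diff trm_deriv trp_deriv assms)

lemma avg_deriv:
  assumes "\<And>j i. ((\<lambda>s. u s j i) has_vector_derivative u' j i) F"
  shows "((\<lambda>s. avg N p (cellf k (u s)) l) has_vector_derivative avg N p (cellf k u') l) F"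
  unfolding avg_def by (intro bounded_linear.has_vector_derivative[OF bounded_linear_scaleR_right]
     has_vector_derivative_add trm_deriv trp_deriv assms)

lemma flux_deriv:
  assumes "\<And>j i. ((\<lambda>s. u s j i) has_vector_derivative u' j i) F"
    and "\<And>j i. ((\<lambda>s. v s j i) has_vector_derivative v' j i) F"
  shows "((\<lambda>s. flux N p K A B (cellf k (u s)) (cellf k (v s)) l) has_vector_derivative
      flux N p K A B (cellf k u') (cellf k v') l) F"
  unfolding flux_def by (intro has_vector_derivative_add mv_deriv avg_deriv jump_deriv assms)

lemma alg_left:
  fixes K A B :: "real^'m^'m"
  assumes K: "transpose K = - K" and A: "transpose A = A" and B: "transpose B = - B"
  shows "- (hat K A B a b a' b' \<bullet> b') + 1/2 * ((K *v b) \<bullet> b')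
    + (1/2 * (hat K A B a' b' a'' b'' \<bullet> b + hat K A B a b a' b' \<bullet> b')
       - 1/4 * ((B *v (b'' - a'')) \<bullet> (b - a) + (B *v (b' - a')) \<bullet> (b' - a')))
    - 1/2 * (1/2 * ((K *v b) \<bullet> b' + (K *v a) \<bullet> a') - hat K A B a b a' b' \<bullet> ((1/2) *\<^sub>R (b' + a'))
       + hat K A B a' b' a'' b'' \<bullet> ((1/2) *\<^sub>R (b + a))) = 0"
  using anti_self[OF K, of a] anti_self[OF K, of b] anti_self[OF K, of a'] anti_self[OF K, of b']
    anti_self[OF B, of a] anti_self[OF B, of b] anti_self[OF B, of a'] anti_self[OF B, of b']
    anti_inner[OF K, of a b] anti_inner[OF K, of a a'] anti_inner[OF K, of a b'] anti_inner[OF K, of b a'] anti_inner[OF K, of b b'] anti_inner[OF K, of a' b']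
    anti_inner[OF B, of a b] anti_inner[OF B, of a a'] anti_inner[OF B, of a b'] anti_inner[OF B, of b a'] anti_inner[OF B, of b b'] anti_inner[OF B, of a' b']
    anti_inner[OF B, of a'' a] anti_inner[OF B, of a'' b] anti_inner[OF B, of b'' a] anti_inner[OF B, of b'' b]
    sym_inner[OF A, of a b] sym_inner[OF A, of a a'] sym_inner[OF A, of a b'] sym_inner[OF A, of b a'] sym_inner[OF A, of b b'] sym_inner[OF A, of a' b']
  unfolding hat_def expand
  by (simp add: algebra_simps)

lemma alg_total:
  fixes K A B :: "real^'m^'m"
  assumes K: "transpose K = - K" and A: "transpose A = A" and B: "transpose B = - B"
  shows "(hat K A B a b a' b' \<bullet> a' - 1/2 * ((K *v a) \<bullet> a'))
    - (hat K A B a b a' b' \<bullet> b' - 1/2 * ((K *v b) \<bullet> b'))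
    + 1/2 * ((K *v ((1/2) *\<^sub>R (b + a)) + A *v (b - a)) \<bullet> (b' - a')
           + (K *v ((1/2) *\<^sub>R (b' + a')) + A *v (b' - a')) \<bullet> (b - a)) = 0"
  using anti_self[OF K, of a] anti_self[OF K, of b] anti_self[OF K, of a'] anti_self[OF K, of b']
    anti_self[OF B, of a] anti_self[OF B, of b] anti_self[OF B, of a'] anti_self[OF B, of b']
    anti_inner[OF K, of a b] anti_inner[OF K, of a a'] anti_inner[OF K, of a b'] anti_inner[OF K, of b a'] anti_inner[OF K, of b b'] anti_inner[OF K, of a' b']
    anti_inner[OF B, of a b] anti_inner[OF B, of a a'] anti_inner[OF B, of a b'] anti_inner[OF B, of b a'] anti_inner[OF B, of b b'] anti_inner[OF B, of a' b']
    sym_inner[OF A, of a b] sym_inner[OF A, of a a'] sym_inner[OF A, of a b'] sym_inner[OF A, of b a'] sym_inner[OF A, of b b'] sym_inner[OF A, of a' b']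
  unfolding hat_def expand
  by (simp add: algebra_simps)

lemma sum_shift_periodic: "f N = f 0 \<Longrightarrow> (\<Sum>j<N. f (Suc j)) = (\<Sum>i<N. (f i :: real))"
  using sum.lessThan_Suc_shift[of f N] sum.lessThan_Suc[of f N] by simp

lemma trm_N: "tr_minus N p u N = tr_minus N p u 0" by (simp add: tr_minus_def)
lemma trp_N: "tr_plus N p u N = tr_plus N p u 0" by (simp add: tr_plus_def)



theorem theorem3p2:
  fixes N k :: nat and p :: "nat \<Rightarrow> real" and T :: real
    and M K A B :: "real^'m^'m"
    and S :: "real^'m \<Rightarrow> real" and gradS :: "real^'m \<Rightarrow> real^'m"
    and c c' :: "real \<Rightarrow> nat \<Rightarrow> nat \<Rightarrow> real^'m"
  assumes N: "N \<ge> 1"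
    and mesh: "\<And>j. j < N \<Longrightarrow> p j < p (Suc j)"
    and T: "T > 0"
    and M_anti: "transpose M = - M"
    and K_anti: "transpose K = - K"
    and A_sym: "transpose A = A"
    and B_anti: "transpose B = - B"
    and S_grad: "\<And>z. (S has_derivative (\<lambda>h. gradS z \<bullet> h)) (at z)"
    and gradS_cont: "continuous_on UNIV gradS"
    and c_deriv: "\<And>t j i. t \<in> {0..T} \<Longrightarrow>
         ((\<lambda>s. c s j i) has_vector_derivative c' t j i) (at t within {0..T})"
    and c'_cont: "\<And>j i. continuous_on {0..T} (\<lambda>t. c' t j i)"
    and scheme: "\<And>t. t \<in> {0..T} \<Longrightarrow> dg_scheme N p k M K A B gradS (c t) (c' t)"
  shows
    "(\<forall>c'' :: real \<Rightarrow> nat \<Rightarrow> nat \<Rightarrow> real^'m.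
        (\<forall>t\<in>{0..T}. \<forall>j i. ((\<lambda>s. c' s j i) has_vector_derivative c'' t j i) (at t within {0..T}))
        \<longrightarrow> (\<forall>t\<in>{0..T}. \<forall>j<N. \<exists>D.
              ((\<lambda>s. local_energy N p k K A B S (c s) (c' s) j) has_real_derivative D) (at t within {0..T})
              \<and> D + (1/2) * Fint N p k K A B (c t) (c' t) (c'' t) (Suc j)
                  - (1/2) * Fint N p k K A B (c t) (c' t) (c'' t) j = 0))
     \<and> (\<forall>t1\<in>{0..T}. \<forall>t2\<in>{0..T}. total_energy N p k K A S (c t1) = total_energy N p k K A S (c t2))"
proof (intro conjI)
  show "\<forall>c'' :: real \<Rightarrow> nat \<Rightarrow> nat \<Rightarrow> real^'m.
        (\<forall>t\<in>{0..T}. \<forall>j i. ((\<lambda>s. c' s j i) has_vector_derivative c'' t j i) (at t within {0..T}))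
        \<longrightarrow> (\<forall>t\<in>{0..T}. \<forall>j<N. \<exists>D.
              ((\<lambda>s. local_energy N p k K A B S (c s) (c' s) j) has_real_derivative D) (at t within {0..T})
              \<and> D + (1/2) * Fint N p k K A B (c t) (c' t) (c'' t) (Suc j)
                  - (1/2) * Fint N p k K A B (c t) (c' t) (c'' t) j = 0)"
  proof (intro allI impI ballI)
    fix c'' :: "real \<Rightarrow> nat \<Rightarrow> nat \<Rightarrow> real^'m" and t j
    assume hc: "\<forall>t\<in>{0..T}. \<forall>j i. ((\<lambda>s. c' s j i) has_vector_derivative c'' t j i) (at t within {0..T})"
      and t: "t \<in> {0..T}" and j: "j < N"
    let ?Z = "cellf k (c t)" and ?W = "cellf k (c' t)" and ?U = "cellf k (c'' t)"
    have cd: "\<And>j i. ((\<lambda>s. c s j i) has_vector_derivative c' t j i) (at t within {0..T})"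
      using c_deriv t by blast
    have cd2: "\<And>j i. ((\<lambda>s. c' s j i) has_vector_derivative c'' t j i) (at t within {0..T})"
      using hc t by blast
    note dc = cell_energy_deriv[where c=c and c'=c' and T=T, OF M_anti K_anti mesh[OF j] S_grad gradS_cont c_deriv c'_cont scheme[OF t] t j]
    note dX1 = inner_deriv[OF flux_deriv[where u=c and u'="c' t" and v=c' and v'="c'' t" and N=N and p=p and K=K and A=A and B=B and k=k and l="Suc j", OF cd cd2]
       trm_deriv[where u=c and u'="c' t" and N=N and p=p and k=k and l="Suc j", OF cd]]
    note dY1 = inner_deriv[OF mv_deriv[OF jump_deriv[where u=c' and u'="c'' t" and N=N and p=p and k=k and l="Suc j", OF cd2], of B]
       jump_deriv[where u=c and u'="c' t" and N=N and p=p and k=k and l="Suc j", OF cd]]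
    note dX0 = inner_deriv[OF flux_deriv[where u=c and u'="c' t" and v=c' and v'="c'' t" and N=N and p=p and K=K and A=A and B=B and k=k and l=j, OF cd cd2]
       trp_deriv[where u=c and u'="c' t" and N=N and p=p and k=k and l=j, OF cd]]
    note dY0 = inner_deriv[OF mv_deriv[OF jump_deriv[where u=c' and u'="c'' t" and N=N and p=p and k=k and l=j, OF cd2], of B]
       jump_deriv[where u=c and u'="c' t" and N=N and p=p and k=k and l=j, OF cd]]
    note dL = DERIV_add[OF DERIV_diff[OF dc DERIV_add[OF DERIV_cmult[OF dX1, of "1/2"] DERIV_cmult[OF dY1, of "1/4"]]]
                 DERIV_diff[OF DERIV_cmult[OF dX0, of "1/2"] DERIV_cmult[OF dY0, of "1/4"]]]
    show "\<exists>D. ((\<lambda>s. local_energy N p k K A B S (c s) (c' s) j) has_real_derivative D) (at t within {0..T})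
              \<and> D + (1/2) * Fint N p k K A B (c t) (c' t) (c'' t) (Suc j)
                  - (1/2) * Fint N p k K A B (c t) (c' t) (c'' t) j = 0"
      apply (rule exI, rule conjI)
       apply (unfold local_energy_def)
       apply (rule dL, simp)
      apply (insert alg_right[OF K_anti A_sym B_anti, of "tr_minus N p ?Z (Suc j)" "tr_plus N p ?Z (Suc j)"
          "tr_minus N p ?W (Suc j)" "tr_plus N p ?W (Suc j)" "tr_minus N p ?U (Suc j)" "tr_plus N p ?U (Suc j)"]
        alg_left[OF K_anti A_sym B_anti, of "tr_minus N p ?Z j" "tr_plus N p ?Z j"
          "tr_minus N p ?W j" "tr_plus N p ?W j" "tr_minus N p ?U j" "tr_plus N p ?U j"])
      apply (unfold Fint_def avgK_def flux_hat avg_def jump_def)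
      apply (simp add: algebra_simps)
      done
  qed
next
  show "\<forall>t1\<in>{0..T}. \<forall>t2\<in>{0..T}. total_energy N p k K A S (c t1) = total_energy N p k K A S (c t2)"
  proof -
    have dT: "((\<lambda>s. total_energy N p k K A S (c s)) has_real_derivative 0) (at t within {0..T})"
      if t: "t \<in> {0..T}" for t
    proof -
      let ?Z = "cellf k (c t)" and ?W = "cellf k (c' t)"
      have cd: "\<And>j i. ((\<lambda>s. c s j i) has_vector_derivative c' t j i) (at t within {0..T})"
        using c_deriv t by blast
      define phi where "phi = (\<lambda>i. flux N p K A B ?Z ?W i \<bullet> tr_minus N p ?W i
          - 1/2 * ((K *v tr_minus N p ?Z i) \<bullet> tr_minus N p ?W i))"
      define psi where "psi = (\<lambda>i. flux N p K A B ?Z ?W i \<bullet> tr_plus N p ?W i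
          - 1/2 * ((K *v tr_plus N p ?Z i) \<bullet> tr_plus N p ?W i))"
      define G' where "G' = (\<lambda>i. (K *v avg N p ?Z i + A *v jump N p ?Z i) \<bullet> jump N p ?W i
          + (K *v avg N p ?W i + A *v jump N p ?W i) \<bullet> jump N p ?Z i)"
      have dcs: "((\<lambda>s. \<Sum>j<N. cell_energy k p K S (c s) j) has_real_derivative (\<Sum>j<N. phi (Suc j) - psi j))
          (at t within {0..T})"
      proof (rule DERIV_sum)
        fix j assume "j \<in> {..<N}"
        then have j: "j < N" by simp
        note dc = cell_energy_deriv[where c=c and c'=c' and T=T, OF M_anti K_anti mesh[OF j] S_grad gradS_cont c_deriv c'_cont scheme[OF t] t j]
        have "phi (Suc j) - psi j = flux N p K A B ?Z ?W (Suc j) \<bullet> tr_minus N p ?W (Suc j)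
          - flux N p K A B ?Z ?W j \<bullet> tr_plus N p ?W j
          - 1/2 * ((K *v tr_minus N p ?Z (Suc j)) \<bullet> tr_minus N p ?W (Suc j)
                 - (K *v tr_plus N p ?Z j) \<bullet> tr_plus N p ?W j)"
          unfolding phi_def psi_def by (simp add: algebra_simps)
        then show "((\<lambda>s. cell_energy k p K S (c s) j) has_real_derivative phi (Suc j) - psi j) (at t within {0..T})"
          using dc by simp
      qed
      have dG: "((\<lambda>s. \<Sum>i<N. (K *v avg N p (cellf k (c s)) i + A *v jump N p (cellf k (c s)) i)
            \<bullet> jump N p (cellf k (c s)) i) has_real_derivative (\<Sum>i<N. G' i)) (at t within {0..T})"
        unfolding G'_def
        by (intro DERIV_sum inner_deriv has_vector_derivative_add mv_deriv
            avg_deriv[where u=c and u'="c' t", OF cd] jump_deriv[where u=c and u'="c' t", OF cd])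
      have d: "((\<lambda>s. total_energy N p k K A S (c s)) has_real_derivative
          (\<Sum>j<N. phi (Suc j) - psi j) + 1/2 * (\<Sum>i<N. G' i)) (at t within {0..T})"
        unfolding total_energy_def by (rule DERIV_add[OF dcs DERIV_cmult[OF dG]])
      have pN: "phi N = phi 0" unfolding phi_def by (simp only: flux_hat trm_N trp_N)
      have z: "phi i - psi i + 1/2 * G' i = 0" for i
        unfolding phi_def psi_def G'_def flux_hat avg_def jump_def
        using alg_total[OF K_anti A_sym B_anti, of "tr_minus N p ?Z i" "tr_plus N p ?Z i"
          "tr_minus N p ?W i" "tr_plus N p ?W i"]
        by (simp add: algebra_simps)
      have "(\<Sum>j<N. phi (Suc j) - psi j) + 1/2 * (\<Sum>i<N. G' i) = (\<Sum>i<N. phi i - psi i + 1/2 * G' i)"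
        by (simp add: sum_subtractf sum.distrib sum_distrib_left sum_shift_periodic[OF pN])
      also have "\<dots> = 0" using z by simp
      finally show ?thesis using d by simp
    qed
    show ?thesis
    proof (intro ballI)
      fix t1 t2 assume t1: "t1 \<in> {0..T}" and t2: "t2 \<in> {0..T}"
      obtain C where "\<forall>x\<in>{0..T}. total_energy N p k K A S (c x) = C"
        using has_field_derivative_zero_constant[OF convex_real_interval(5) dT] by blast
      then show "total_energy N p k K A S (c t1) = total_energy N p k K A S (c t2)" using t1 t2 by simp
    qed
  qed
qed

end
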